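(* Let $a>0$, $\beta>0$, and let $\lambda$ be feasible. Then for every $0<\delta\le\delta_0$, \[ |g|^2\ge\begin{cases} 9\mathrm{e}^{-4ka}\dfrac{\delta^2}{(2\delta^2+\lambda\delta^{\beta+1})^2} & \text{for } 0\le k\le k_0(\delta),\\[0.4cm] \mathrm{e}^{-ka}\dfrac{\delta^2}{(2\delta^2+\lambda\delta^{\beta+1})^{1/2}} & \text{for } k\ge k_0(\delta). \end{cases} \]
   Context: For $0<\delta<1$ and constants $\beta>0$, $\lambda\in\mathbb{R}$, put $\mu=\delta+\lambda\delta^{\beta}$. The constant $\lambda$ is called feasible if $\lambda>0$ when $0<\beta<1$, $\lambda\ge -1$ when $\beta=1$, and $\lambda\neq 0$ when $\beta>1$. For feasible $\lambda$, $\delta_\mu=\delta_\mu(\beta,\lambda)\in(0,1)$ denotes a number such that $\mu\ge 0$ for all $0<\delta\le\delta_\mu$. For $k\in\mathbb{R}$ define \[ g=g(k,\delta)=\mathrm{i}\delta\left[1-\frac{(\delta+2\mathrm{i})(2\mathrm{i}-\lambda\delta^{\beta})}{\delta(2\delta+\lambda\delta^{\beta})}\mathrm{e}^{-2|k|a}\right], \qquad k_0(\delta)=\frac{1}{2a}\ln\!\left(\frac{1}{2\delta^2+\lambda\delta^{\beta+1}}\right), \] and let $0<\delta_0\le\delta_\mu$ be such that $k_0(\delta)>0$ for all $0<\delta\le\delta_0$. *)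

theory Defs
  imports Complex_Main
begin

definition feasible :: "real \<Rightarrow> real \<Rightarrow> bool" where
  "feasible \<beta> lam \<longleftrightarrow>
     (\<beta> < 1 \<longrightarrow> lam > 0) \<and> (\<beta> = 1 \<longrightarrow> lam \<ge> -1) \<and> (\<beta> > 1 \<longrightarrow> lam \<noteq> 0)"

definition mu :: "real \<Rightarrow> real \<Rightarrow> real \<Rightarrow> real" where
  "mu \<beta> lam \<delta> = \<delta> + lam * \<delta> powr \<beta>"

definition gfun :: "real \<Rightarrow> real \<Rightarrow> real \<Rightarrow> real \<Rightarrow> real \<Rightarrow> complex" where
  "gfun a \<beta> lam k \<delta> =
     \<i> * complex_of_real \<delta> *
     (1 - ((complex_of_real \<delta> + 2 * \<i>) * (2 * \<i> - complex_of_real (lam * \<delta> powr \<beta>)))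
          / complex_of_real (\<delta> * (2 * \<delta> + lam * \<delta> powr \<beta>))
          * complex_of_real (exp (- 2 * \<bar>k\<bar> * a)))"

definition k0 :: "real \<Rightarrow> real \<Rightarrow> real \<Rightarrow> real \<Rightarrow> real" where
  "k0 a \<beta> lam \<delta> = (1 / (2 * a)) * ln (1 / (2 * \<delta>^2 + lam * \<delta> powr (\<beta> + 1)))"

end

theory Submission
  imports Defs
begin

lemma gform:
  assumes "P = \<delta> * (2 * \<delta> + L)" "P \<noteq> 0"
  shows "\<i> * complex_of_real \<delta> *
     (1 - ((complex_of_real \<delta> + 2 * \<i>) * (2 * \<i> - complex_of_real L))
          / complex_of_real P * complex_of_real E)
   = Complex (\<delta> * ((2*\<delta> - 2*L)*E/P)) (\<delta> * (1 + (\<delta>*L+4)*E/P))"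
  using assms by (simp add: complex_eq_iff field_simps Re_divide Im_divide) (simp add: algebra_simps power2_eq_square)

lemma cmod_sq: "(cmod (Complex x y))^2 = x^2 + y^2"
  by (simp add: cmod_def)

theorem lemma5p1:
  fixes a \<beta> lam \<delta>\<mu> \<delta>0 :: real
  assumes "a > 0" and "\<beta> > 0" and "feasible \<beta> lam"
    and "0 < \<delta>\<mu>" and "\<delta>\<mu> < 1"
    and "\<forall>\<delta>. 0 < \<delta> \<and> \<delta> \<le> \<delta>\<mu> \<longrightarrow> mu \<beta> lam \<delta> \<ge> 0"
    and "0 < \<delta>0" and "\<delta>0 \<le> \<delta>\<mu>"
    and "\<forall>\<delta>. 0 < \<delta> \<and> \<delta> \<le> \<delta>0 \<longrightarrow> k0 a \<beta> lam \<delta> > 0"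
  shows "\<forall>\<delta>. 0 < \<delta> \<and> \<delta> \<le> \<delta>0 \<longrightarrow>
     (\<forall>k::real. 0 \<le> k \<and> k \<le> k0 a \<beta> lam \<delta> \<longrightarrow>
        (cmod (gfun a \<beta> lam k \<delta>))^2 \<ge>
          9 * exp (- 4 * k * a) * \<delta>^2 / (2 * \<delta>^2 + lam * \<delta> powr (\<beta> + 1))^2) \<and>
     (\<forall>k::real. k \<ge> k0 a \<beta> lam \<delta> \<longrightarrow>
        (cmod (gfun a \<beta> lam k \<delta>))^2 \<ge>
          exp (- k * a) * \<delta>^2 / sqrt (2 * \<delta>^2 + lam * \<delta> powr (\<beta> + 1)))"
proof (intro allI impI)
  fix \<delta> :: real
  assume d: "0 < \<delta> \<and> \<delta> \<le> \<delta>0"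
  define L where "L = lam * \<delta> powr \<beta>"
  define P where "P = \<delta> * (2 * \<delta> + L)"
  have mu: "\<delta> + L \<ge> 0" using assms(6) d assms(8) unfolding mu_def L_def by auto
  have P_eq: "2 * \<delta>^2 + lam * \<delta> powr (\<beta> + 1) = P"
    using d by (simp add: P_def L_def powr_add power2_eq_square algebra_simps)
  have Ppos: "P > 0" unfolding P_def using d mu by (intro mult_pos_pos) auto
  have dL: "\<delta> * L + 1 > 0"
  proof -
    have "\<delta> * (\<delta> + L) \<ge> 0" using d mu by simp
    hence "\<delta> * L \<ge> - \<delta> * \<delta>" by (simp add: algebra_simps)
    moreover have "\<delta> < 1" using d assms(8) assms(5) by linarith
    hence "\<delta> * \<delta> < 1 * 1" using d by (intro mult_strict_mono) auto
    ultimately show ?thesis by linarith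
  qed
  have k0pos: "k0 a \<beta> lam \<delta> > 0" using assms(9) d by auto
  have G: "gfun a \<beta> lam k \<delta> = Complex (\<delta> * ((2*\<delta> - 2*L)*exp (- 2 * \<bar>k\<bar> * a)/P))
           (\<delta> * (1 + (\<delta>*L+4)*exp (- 2 * \<bar>k\<bar> * a)/P))" for k
    unfolding gfun_def L_def[symmetric] P_def[symmetric]
    by (rule gform) (use Ppos P_def in auto)
  have sq: "(cmod (gfun a \<beta> lam k \<delta>))^2 \<ge> \<delta>^2 * (1 + (\<delta>*L+4)*exp (- 2 * \<bar>k\<bar> * a)/P)^2" for k
    unfolding G cmod_sq by (simp add: power_mult_distrib)
  show "(\<forall>k::real. 0 \<le> k \<and> k \<le> k0 a \<beta> lam \<delta> \<longrightarrow>
        (cmod (gfun a \<beta> lam k \<delta>))^2 \<ge>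
          9 * exp (- 4 * k * a) * \<delta>^2 / (2 * \<delta>^2 + lam * \<delta> powr (\<beta> + 1))^2) \<and>
     (\<forall>k::real. k \<ge> k0 a \<beta> lam \<delta> \<longrightarrow>
        (cmod (gfun a \<beta> lam k \<delta>))^2 \<ge>
          exp (- k * a) * \<delta>^2 / sqrt (2 * \<delta>^2 + lam * \<delta> powr (\<beta> + 1)))"
    unfolding P_eq
  proof (intro conjI allI impI)
    fix k :: real assume k: "0 \<le> k \<and> k \<le> k0 a \<beta> lam \<delta>"
    define E where "E = exp (- 2 * k * a)"
    have E: "E > 0" unfolding E_def by simp
    have E2: "exp (- 4 * k * a) = E^2" unfolding E_def power2_eq_square exp_add[symmetric] by simp
    have "(\<delta>*L+1)*E \<ge> 0" using dL E by simp
    hence "3 * E \<le> P + (\<delta>*L+4)*E" using Ppos by (simp add: algebra_simps)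
    hence "3 * E / P \<le> (P + (\<delta>*L+4)*E) / P" using Ppos by (intro divide_right_mono) auto
    also have "\<dots> = 1 + (\<delta>*L+4)*E/P" using Ppos by (simp add: add_divide_distrib)
    finally have h: "3 * E / P \<le> 1 + (\<delta>*L+4)*E/P" .
    have "(3 * E / P)^2 \<le> (1 + (\<delta>*L+4)*E/P)^2"
      using Ppos E by (intro power_mono[OF h]) auto
    hence "\<delta>^2 * (3 * E / P)^2 \<le> \<delta>^2 * (1 + (\<delta>*L+4)*E/P)^2" by (intro mult_left_mono) auto
    moreover have "\<bar>k\<bar> = k" using k by simp
    moreover have "9 * exp (- 4 * k * a) * \<delta>^2 / P^2 = \<delta>^2 * (3 * E / P)^2"
      unfolding E2 by (simp add: power_divide power_mult_distrib)
    ultimately show "9 * exp (- 4 * k * a) * \<delta>^2 / P^2 \<le> (cmod (gfun a \<beta> lam k \<delta>))^2"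
      using sq[of k] unfolding E_def by simp
  next
    fix k :: real assume k: "k0 a \<beta> lam \<delta> \<le> k"
    define E where "E = exp (- 2 * \<bar>k\<bar> * a)"
    have E: "E > 0" unfolding E_def by simp
    have nn: "(\<delta>*L+4)*E/P \<ge> 0" using Ppos E dL by (intro divide_nonneg_pos mult_nonneg_nonneg) auto
    have "1 \<le> (1 + (\<delta>*L+4)*E/P)^2" using nn by (intro one_le_power) auto
    hence "\<delta>^2 * 1 \<le> \<delta>^2 * (1 + (\<delta>*L+4)*E/P)^2" by (intro mult_left_mono) auto
    hence A: "\<delta>^2 \<le> (cmod (gfun a \<beta> lam k \<delta>))^2" using sq[of k] unfolding E_def by linarith
    have "(1 / (2 * a)) * ln (1/P) \<le> k" using k unfolding k0_def P_eq .
    hence "ln (1/P) \<le> 2 * a * k" using assms(1) by (simp add: field_simps)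
    moreover have "ln (1/P) = - ln P" using Ppos by (simp add: ln_div)
    ultimately have "- k * a \<le> 1/2 * ln P" by (simp add: algebra_simps)
    hence "exp (- k * a) \<le> exp (1/2 * ln P)" by simp
    also have "exp (1/2 * ln P) = sqrt P" using Ppos
      by (simp add: powr_half_sqrt[symmetric] powr_def)
    finally have B: "exp (- k * a) / sqrt P \<le> 1" using Ppos by simp
    have "exp (- k * a) * \<delta>^2 / sqrt P = (exp (- k * a) / sqrt P) * \<delta>^2" by simp
    also have "\<dots> \<le> 1 * \<delta>^2" using B by (intro mult_right_mono) auto
    finally show "exp (- k * a) * \<delta>^2 / sqrt P \<le> (cmod (gfun a \<beta> lam k \<delta>))^2" using A by simp
  qed
qed

end
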